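(* Let $N\ge3$. The set $C_N$ of valid common lines data is homeomorphic to the quotient $\mathcal G/\mathrm O(3)$ of the set of generic $N$-tuples of frames by the diagonal action of $\mathrm O(3)$.
   Context: A frame is an ordered pair $(a,b)$ of orthonormal vectors in $\mathbb R^3$. Planes $P_1=\dots=P_N=\mathbb R^2$; a frame $F_i=(a_i,b_i)$ gives the embedding $\iota_i(x,y)=xa_i+yb_i$ of $P_i$ into $\mathbb R^3$. $(F_1,\dots,F_N)$ is generic if the planes $\iota_i(P_i)$ are pairwise distinct and the lines $\iota_i(P_i)\cap\iota_j(P_j)$, $i<j$, are pairwise distinct; $\mathcal G$ is the set of generic tuples. $\mathrm O(3)$ is the group of all $3\times3$ orthogonal matrices acting by $A\cdot(F_1,\dots,F_N)=(AF_1,\dots,AF_N)$, $A(a,b)=(Aa,Ab)$. Common lines data is a collection $([v_{ij}:v_{ji}])_{1\le i<j\le N}$ with $[v_{ij}:v_{ji}]\in\mathbb P(P_i\times P_j)\cong\mathbb{RP}^3$ (nonzero pairs up to scaling) and $\|v_{ij}\|^2=\|v_{ji}\|^2$, viewed as a subset of $(\mathbb{RP}^3)^{\binom N2}$; frames realize it if $\iota_i(v_{ij})=\iota_j(v_{ji})$ for all $i<j$; it is valid if realized by some generic tuple, and $C_N$ is the set of valid data. *)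

theory Defs
  imports "HOL-Analysis.Analysis"
begin

definition quotient_topology :: "'a topology \<Rightarrow> ('a \<times> 'a) set \<Rightarrow> 'a set topology" where
  "quotient_topology X r =
     topology (\<lambda>U. U \<subseteq> (\<lambda>x. r `` {x}) ` topspace X \<and>
                   openin X {x \<in> topspace X. r `` {x} \<in> U})"

type_synonym vec3 = "real ^ 3"
type_synonym frame = "vec3 \<times> vec3"
type_synonym plane_vec = "real ^ 2"

definition is_frame :: "frame \<Rightarrow> bool" where
  "is_frame F \<longleftrightarrow> norm (fst F) = 1 \<and> norm (snd F) = 1 \<and> fst F \<bullet> snd F = 0"

definition emb :: "frame \<Rightarrow> plane_vec \<Rightarrow> vec3" where
  "emb F v = (v $ 1) *\<^sub>R fst F + (v $ 2) *\<^sub>R snd F"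

definition plane_of :: "frame \<Rightarrow> vec3 set" where
  "plane_of F = range (emb F)"

text \<open>Index set of pairs i<j among 0..N-1 (0-based indexing of the N planes).\<close>
definition pairs :: "nat \<Rightarrow> (nat \<times> nat) set" where
  "pairs N = {(i, j). i < j \<and> j < N}"

definition generic :: "nat \<Rightarrow> (nat \<Rightarrow> frame) set" where
  "generic N = {F \<in> PiE {..<N} (\<lambda>_. UNIV).
      (\<forall>i<N. is_frame (F i)) \<and>
      (\<forall>i<N. \<forall>j<N. i \<noteq> j \<longrightarrow> plane_of (F i) \<noteq> plane_of (F j)) \<and>
      (\<forall>p\<in>pairs N. \<forall>q\<in>pairs N. p \<noteq> q \<longrightarrow>
         plane_of (F (fst p)) \<inter> plane_of (F (snd p)) \<noteq>
         plane_of (F (fst q)) \<inter> plane_of (F (snd q)))}"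

definition frames_top :: "nat \<Rightarrow> (nat \<Rightarrow> frame) topology" where
  "frames_top N = product_topology (\<lambda>_. euclidean) {..<N}"

definition act :: "real^3^3 \<Rightarrow> frame \<Rightarrow> frame" where
  "act A F = (A *v fst F, A *v snd F)"

definition O3_rel :: "nat \<Rightarrow> ((nat \<Rightarrow> frame) \<times> (nat \<Rightarrow> frame)) set" where
  "O3_rel N = {(F, F'). F \<in> generic N \<and> F' \<in> generic N \<and>
      (\<exists>A. orthogonal_matrix A \<and> (\<forall>i<N. F' i = act A (F i)))}"

definition G_mod_O3 :: "nat \<Rightarrow> (nat \<Rightarrow> frame) set topology" where
  "G_mod_O3 N = quotient_topology (subtopology (frames_top N) (generic N)) (O3_rel N)"

text \<open>Proportionality of nonzero pairs; the class of (v,w) is the point [v:w].\<close>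
definition proj_rel :: "((plane_vec \<times> plane_vec) \<times> (plane_vec \<times> plane_vec)) set" where
  "proj_rel = {(x, y). x \<noteq> 0 \<and> y \<noteq> 0 \<and> (\<exists>c::real. c \<noteq> 0 \<and> y = c *\<^sub>R x)}"

definition RP3 :: "(plane_vec \<times> plane_vec) set topology" where
  "RP3 = quotient_topology (subtopology euclidean (- {0})) proj_rel"

text \<open>Ambient space (RP^3)^(N choose 2), indexed by pairs (i,j) with i<j<N.\<close>
definition CL_top :: "nat \<Rightarrow> (nat \<times> nat \<Rightarrow> (plane_vec \<times> plane_vec) set) topology" where
  "CL_top N = product_topology (\<lambda>_. RP3) (pairs N)"

definition realizes :: "nat \<Rightarrow> (nat \<Rightarrow> frame) \<Rightarrow> (nat \<times> nat \<Rightarrow> (plane_vec \<times> plane_vec) set) \<Rightarrow> bool" where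
  "realizes N F d \<longleftrightarrow>
     (\<forall>(i, j)\<in>pairs N. \<exists>(v, w)\<in>d (i, j). emb (F i) v = emb (F j) w)"

definition valid_CL :: "nat \<Rightarrow> (nat \<times> nat \<Rightarrow> (plane_vec \<times> plane_vec) set) set" where
  "valid_CL N = {d \<in> topspace (CL_top N).
      (\<forall>p\<in>pairs N. \<forall>(v, w)\<in>d p. norm v ^ 2 = norm w ^ 2) \<and>
      (\<exists>F\<in>generic N. realizes N F d)}"

end

theory Submission
  imports Defs "HOL-Analysis.Cross3"
begin

lemma istopology_quot:
  "istopology (\<lambda>U. U \<subseteq> (\<lambda>x. r `` {x}) ` topspace X \<and>
                   openin X {x \<in> topspace X. r `` {x} \<in> U})"
proof -
  let ?L = "(\<lambda>U. U \<subseteq> (\<lambda>x. r `` {x}) ` topspace X \<and> openin X {x \<in> topspace X. r `` {x} \<in> U})"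
  have 1: "?L (S \<inter> T)" if a: "?L S" and b: "?L T" for S T
  proof -
    have e: "{x \<in> topspace X. r `` {x} \<in> S \<inter> T} = {x \<in> topspace X. r `` {x} \<in> S} \<inter> {x \<in> topspace X. r `` {x} \<in> T}" by auto
    show ?thesis unfolding e using a b by (auto intro: openin_Int)
  qed
  have 2: "?L (\<Union>K)" if K: "\<forall>S\<in>K. ?L S" for K
  proof -
    have e: "{x \<in> topspace X. r `` {x} \<in> \<Union>K} = (\<Union>S\<in>K. {x \<in> topspace X. r `` {x} \<in> S})" by auto
    show ?thesis unfolding e using K by auto
  qed
  show ?thesis unfolding istopology_def using 1 2 by blast
qed

lemma openin_quot:
  "openin (quotient_topology X r) U \<longleftrightarrow> U \<subseteq> (\<lambda>x. r `` {x}) ` topspace X \<and>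
                   openin X {x \<in> topspace X. r `` {x} \<in> U}"
  unfolding quotient_topology_def by (subst topology_inverse'[OF istopology_quot]) (rule refl)

lemma topspace_quot: "topspace (quotient_topology X r) = (\<lambda>x. r `` {x}) ` topspace X"
proof -
  have "openin (quotient_topology X r) ((\<lambda>x. r `` {x}) ` topspace X)"
    unfolding openin_quot
  proof
    have "{x \<in> topspace X. r `` {x} \<in> (\<lambda>x. r `` {x}) ` topspace X} = topspace X" by blast
    then show "openin X {x \<in> topspace X. r `` {x} \<in> (\<lambda>x. r `` {x}) ` topspace X}" by simp
  qed simp
  then have 1: "(\<lambda>x. r `` {x}) ` topspace X \<subseteq> topspace (quotient_topology X r)"
    by (rule openin_subset)
  have "openin (quotient_topology X r) (topspace (quotient_topology X r))" by (rule openin_topspace)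
  then have 2: "topspace (quotient_topology X r) \<subseteq> (\<lambda>x. r `` {x}) ` topspace X"
    unfolding openin_quot by (rule conjunct1)
  from 1 2 show ?thesis by (rule subset_antisym[rotated])
qed

lemma cont_quot_map: "continuous_map X (quotient_topology X r) (\<lambda>x. r `` {x})"
  unfolding continuous_map_def topspace_quot
  by (auto simp: openin_quot)

lemma cont_from_quot_open:
  assumes V: "openin (quotient_topology X r) V"
    and c: "continuous_map (subtopology X {x \<in> topspace X. r `` {x} \<in> V}) Y (\<lambda>x. f (r `` {x}))"
  shows "continuous_map (subtopology (quotient_topology X r) V) Y f"
proof -
  let ?P = "{x \<in> topspace X. r `` {x} \<in> V}"
  have Po: "openin X ?P" using V by (simp add: openin_quot)
  have Vs: "V \<subseteq> (\<lambda>x. r `` {x}) ` topspace X" using V by (simp add: openin_quot)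
  show ?thesis
    unfolding continuous_map_def
  proof (intro conjI allI impI)
    show "f \<in> topspace (subtopology (quotient_topology X r) V) \<rightarrow> topspace Y"
    proof
      fix y assume "y \<in> topspace (subtopology (quotient_topology X r) V)"
      then have "y \<in> V" by simp
      then obtain x where x: "x \<in> topspace X" "y = r `` {x}" using Vs by blast
      have "r `` {x} \<in> V" using \<open>y \<in> V\<close> unfolding x(2) .
      then have "x \<in> topspace (subtopology X ?P)" using x(1) by simp
      moreover have "(\<lambda>x. f (r `` {x})) \<in> topspace (subtopology X ?P) \<rightarrow> topspace Y" using c by (simp add: continuous_map_def)
      ultimately have "f (r `` {x}) \<in> topspace Y" by (rule funcset_mem[rotated])
      then show "f y \<in> topspace Y" using x by simp
    qed
  next
    fix W assume W: "openin Y W"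
    have "openin (subtopology X ?P) {x \<in> topspace (subtopology X ?P). f (r `` {x}) \<in> W}"
      using c W unfolding continuous_map_def by blast
    then have o: "openin X {x \<in> ?P. f (r `` {x}) \<in> W}"
      using Po openin_trans_full by (simp add: openin_open_subtopology inf_absorb2)
    have sub: "{y \<in> topspace (subtopology (quotient_topology X r) V). f y \<in> W} \<subseteq> V"
      by auto
    have Wo: "openin (quotient_topology X r) {y \<in> topspace (subtopology (quotient_topology X r) V). f y \<in> W}"
      unfolding openin_quot topspace_subtopology topspace_quot
    proof
      show "{y \<in> (\<lambda>x. r `` {x}) ` topspace X \<inter> V. f y \<in> W} \<subseteq> (\<lambda>x. r `` {x}) ` topspace X" by auto
      have "{x \<in> topspace X. r `` {x} \<in> {y \<in> (\<lambda>x. r `` {x}) ` topspace X \<inter> V. f y \<in> W}}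
          = {x \<in> ?P. f (r `` {x}) \<in> W}" by auto
      then show "openin X {x \<in> topspace X. r `` {x} \<in> {y \<in> (\<lambda>x. r `` {x}) ` topspace X \<inter> V. f y \<in> W}}"
        using o by simp
    qed
    then show "openin (subtopology (quotient_topology X r) V) {y \<in> topspace (subtopology (quotient_topology X r) V). f y \<in> W}"
      using openin_subtopology_Int[OF Wo, of V] sub by (metis Int_absorb2)
  qed
qed

lemma cont_from_quot:
  assumes c: "continuous_map X Y (\<lambda>x. f (r `` {x}))"
  shows "continuous_map (quotient_topology X r) Y f"
proof -
  have "continuous_map (subtopology (quotient_topology X r) (topspace (quotient_topology X r))) Y f"
    by (rule cont_from_quot_open[OF openin_topspace]) (simp add: topspace_quot continuous_map_from_subtopology[OF c])
  then show ?thesis by simp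
qed

lemma cont_local:
  assumes "\<And>x. x \<in> topspace X \<Longrightarrow> \<exists>U. openin X U \<and> x \<in> U \<and> continuous_map (subtopology X U) Y f"
  shows "continuous_map X Y f"
  unfolding continuous_map_def
proof (intro conjI allI impI)
  show "f \<in> topspace X \<rightarrow> topspace Y"
    using assms unfolding continuous_map_def by (fastforce simp: topspace_subtopology)
next
  fix W assume W: "openin Y W"
  show "openin X {x \<in> topspace X. f x \<in> W}"
  proof (subst openin_subopen, intro ballI)
    fix x assume "x \<in> {x \<in> topspace X. f x \<in> W}"
    then obtain U where U: "openin X U" "x \<in> U" "continuous_map (subtopology X U) Y f"
      using assms by blast
    have "openin (subtopology X U) {y \<in> topspace (subtopology X U). f y \<in> W}"
      using U(3) W unfolding continuous_map_def by blast
    then have "openin X {y \<in> topspace (subtopology X U). f y \<in> W}"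
      using U(1) openin_trans_full by blast
    moreover have "{y \<in> topspace (subtopology X U). f y \<in> W} \<subseteq> {x \<in> topspace X. f x \<in> W}" by auto
    ultimately show "\<exists>T. openin X T \<and> x \<in> T \<and> T \<subseteq> {x \<in> topspace X. f x \<in> W}"
      using U(2) \<open>x \<in> {x \<in> topspace X. f x \<in> W}\<close> openin_subset[OF U(1)] by (intro exI[of _ "{y \<in> topspace (subtopology X U). f y \<in> W}"]) auto
  qed
qed

lemma inner2: "(v::real^2) \<bullet> w = v$1 * w$1 + v$2 * w$2"
  by (simp add: inner_vec_def sum_2)

lemma frame_facts:
  assumes "is_frame F"
  shows "fst F \<bullet> fst F = 1" "snd F \<bullet> snd F = 1" "fst F \<bullet> snd F = 0" "snd F \<bullet> fst F = 0"
  using assms unfolding is_frame_def by (auto simp: norm_eq_1 inner_commute)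

lemma emb_inner:
  assumes "is_frame F"
  shows "emb F v \<bullet> emb F w = v \<bullet> w"
  using frame_facts[OF assms]
  by (simp add: emb_def inner2 inner_add_left inner_add_right algebra_simps)

lemma emb_norm: "is_frame F \<Longrightarrow> norm (emb F v) = norm v"
  by (simp add: norm_eq_sqrt_inner emb_inner)

lemma emb_add: "emb F (v + w) = emb F v + emb F w"
  by (simp add: emb_def algebra_simps)
lemma emb_scale: "emb F (c *\<^sub>R v) = c *\<^sub>R emb F v"
  by (simp add: emb_def algebra_simps)
lemma emb_diff: "emb F (v - w) = emb F v - emb F w"
  by (simp add: emb_def algebra_simps)

lemma emb_inj: "is_frame F \<Longrightarrow> emb F v = emb F w \<Longrightarrow> v = w"
  by (metis emb_diff emb_norm eq_iff_diff_eq_0 norm_eq_zero)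

definition nrm :: "frame \<Rightarrow> vec3" where "nrm F = cross3 (fst F) (snd F)"

lemma nrm_facts:
  assumes "is_frame F"
  shows "nrm F \<bullet> nrm F = 1" "nrm F \<bullet> fst F = 0" "nrm F \<bullet> snd F = 0"
    "fst F \<bullet> nrm F = 0" "snd F \<bullet> nrm F = 0"
proof -
  have "(norm (nrm F))\<^sup>2 = 1"
    using norm_cross_dot[of "fst F" "snd F"] assms unfolding is_frame_def nrm_def by simp
  then show "nrm F \<bullet> nrm F = 1" by (simp add: power2_norm_eq_inner)
  show "nrm F \<bullet> fst F = 0" "nrm F \<bullet> snd F = 0" "fst F \<bullet> nrm F = 0" "snd F \<bullet> nrm F = 0"
    unfolding nrm_def using dot_cross_self by (auto simp: inner_commute)
qed

lemma cross_perp: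
  fixes a b x :: vec3
  assumes "cross3 a b \<noteq> 0" "x \<bullet> a = 0" "x \<bullet> b = 0"
  shows "\<exists>c. x = c *\<^sub>R cross3 a b"
proof -
  have "cross3 x (cross3 a b) = (x \<bullet> b) *\<^sub>R a - (x \<bullet> a) *\<^sub>R b"
    unfolding vec_eq_iff forall_3 by (simp add: cross3_def inner_vec_def sum_3 algebra_simps)
  then have "cross3 x (cross3 a b) = 0" using assms by simp
  then have "collinear {0, cross3 a b, x}" by (simp add: cross_eq_0 insert_commute)
  then obtain c where "x = c *\<^sub>R cross3 a b \<or> x = 0" using assms(1) collinear_lemma by metis
  then show ?thesis by (metis scale_zero_left)
qed

lemma decomp2:
  assumes F: "is_frame F" and x: "x \<bullet> nrm F = 0"
  shows "x = emb F (vector [x \<bullet> fst F, x \<bullet> snd F])"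
proof -
  define y where "y = x - (x \<bullet> fst F) *\<^sub>R fst F - (x \<bullet> snd F) *\<^sub>R snd F"
  note ff = frame_facts[OF F] nrm_facts[OF F]
  have "y \<bullet> fst F = 0" "y \<bullet> snd F = 0"
    using ff by (auto simp: y_def inner_diff_left inner_diff_right inner_commute)
  moreover have "cross3 (fst F) (snd F) \<noteq> 0" using ff by (metis nrm_def inner_zero_left zero_neq_one)
  ultimately obtain c where c: "y = c *\<^sub>R nrm F" using cross_perp unfolding nrm_def by blast
  have "y \<bullet> nrm F = 0" using ff x by (simp add: y_def inner_diff_left)
  then have "c = 0" using c ff by simp
  then have "y = 0" using c by simp
  have "x = y + (x \<bullet> fst F) *\<^sub>R fst F + (x \<bullet> snd F) *\<^sub>R snd F" by (simp add: y_def)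
  then show ?thesis using \<open>y = 0\<close> by (simp add: emb_def)
qed

lemma decomp3:
  assumes F: "is_frame F"
  shows "x = (x \<bullet> fst F) *\<^sub>R fst F + (x \<bullet> snd F) *\<^sub>R snd F + (x \<bullet> nrm F) *\<^sub>R nrm F"
proof -
  define y where "y = x - (x \<bullet> nrm F) *\<^sub>R nrm F"
  note ff = frame_facts[OF F] nrm_facts[OF F]
  have "y \<bullet> nrm F = 0" using ff by (simp add: y_def inner_diff_left)
  from decomp2[OF F this] have "y = emb F (vector [y \<bullet> fst F, y \<bullet> snd F])" .
  moreover have "y \<bullet> fst F = x \<bullet> fst F" "y \<bullet> snd F = x \<bullet> snd F"
    using ff by (simp_all add: y_def inner_diff_left inner_diff_right inner_commute)
  ultimately have "y = (x \<bullet> fst F) *\<^sub>R fst F + (x \<bullet> snd F) *\<^sub>R snd F" by (simp add: emb_def)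
  moreover have "x = y + (x \<bullet> nrm F) *\<^sub>R nrm F" by (simp add: y_def)
  ultimately show ?thesis by simp
qed

lemma emb_perp: "is_frame F \<Longrightarrow> emb F v \<bullet> nrm F = 0"
  using nrm_facts[of F] by (simp add: emb_def inner_add_left)

lemma plane_eq: "is_frame F \<Longrightarrow> plane_of F = {x. x \<bullet> nrm F = 0}"
  unfolding plane_of_def using decomp2 emb_perp by blast

lemma orth_inner: "orthogonal_matrix A \<Longrightarrow> (A *v x) \<bullet> (A *v y) = x \<bullet> (y::real^'n)"
  using orthogonal_transformation_matrix[of "\<lambda>x. A *v x"]
  by (simp add: matrix_of_matrix_vector_mul orthogonal_transformation_def)

lemma orth_inv: "orthogonal_matrix A \<Longrightarrow> transpose A *v (A *v x) = (x::real^'n)"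
  by (simp add: matrix_vector_mul_assoc orthogonal_matrix)

lemma orth_inj: "orthogonal_matrix A \<Longrightarrow> A *v x = A *v y \<Longrightarrow> (x::real^'n) = y"
  by (metis orth_inv)

lemma act_emb: "emb (act A F) v = A *v emb F v"
  by (simp add: act_def emb_def algebra_simps)

lemma act_frame: "orthogonal_matrix A \<Longrightarrow> is_frame F \<Longrightarrow> is_frame (act A F)"
  by (simp add: is_frame_def act_def norm_eq_sqrt_inner orth_inner)

lemma act_plane: "plane_of (act A F) = (\<lambda>x. A *v x) ` plane_of F"
  unfolding plane_of_def by (auto simp: act_emb)

lemma act_comp: "act B (act A F) = act (B ** A) F"
  by (simp add: act_def matrix_vector_mul_assoc)

lemma act_id: "act (mat 1) F = F"
  by (simp add: act_def)

lemma act_inv: "orthogonal_matrix A \<Longrightarrow> act (transpose A) (act A F) = F"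
  unfolding act_def fst_conv snd_conv by (simp only: orth_inv prod.collapse)

definition cdir :: "frame \<Rightarrow> frame \<Rightarrow> vec3" where
  "cdir F1 F2 = cross3 (nrm F1) (nrm F2)"

lemma cdir_nz:
  assumes F1: "is_frame F1" and F2: "is_frame F2" and ne: "plane_of F1 \<noteq> plane_of F2"
  shows "cdir F1 F2 \<noteq> 0"
proof
  assume "cdir F1 F2 = 0"
  then have "collinear {0, nrm F1, nrm F2}" by (simp add: cdir_def cross_eq_0)
  moreover have "nrm F1 \<noteq> 0" "nrm F2 \<noteq> 0" using nrm_facts[OF F1] nrm_facts[OF F2] by auto
  ultimately obtain c where c: "nrm F2 = c *\<^sub>R nrm F1" using collinear_lemma by metis
  then have "c \<noteq> 0" using \<open>nrm F2 \<noteq> 0\<close> by auto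
  have "plane_of F2 = plane_of F1"
    unfolding plane_eq[OF F1] plane_eq[OF F2] c using \<open>c \<noteq> 0\<close> by auto
  with ne show False by simp
qed

lemma cdir_perp: "cdir F1 F2 \<bullet> nrm F1 = 0" "cdir F1 F2 \<bullet> nrm F2 = 0"
  unfolding cdir_def using dot_cross_self by (auto simp: inner_commute)

lemma line_eq:
  assumes F1: "is_frame F1" and F2: "is_frame F2" and ne: "plane_of F1 \<noteq> plane_of F2"
  shows "plane_of F1 \<inter> plane_of F2 = range (\<lambda>c. c *\<^sub>R cdir F1 F2)"
proof
  show "plane_of F1 \<inter> plane_of F2 \<subseteq> range (\<lambda>c. c *\<^sub>R cdir F1 F2)"
  proof
    fix x assume "x \<in> plane_of F1 \<inter> plane_of F2"
    then have "x \<bullet> nrm F1 = 0" "x \<bullet> nrm F2 = 0" unfolding plane_eq[OF F1] plane_eq[OF F2] by auto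
    then obtain c where "x = c *\<^sub>R cdir F1 F2"
      using cross_perp[of "nrm F1" "nrm F2" x] cdir_nz[OF assms] unfolding cdir_def by blast
    then show "x \<in> range (\<lambda>c. c *\<^sub>R cdir F1 F2)" by blast
  qed
  show "range (\<lambda>c. c *\<^sub>R cdir F1 F2) \<subseteq> plane_of F1 \<inter> plane_of F2"
    unfolding plane_eq[OF F1] plane_eq[OF F2] by (auto simp: cdir_perp(1)[of F1 F2] cdir_perp(2)[of F1 F2])
qed

lemma line_span:
  fixes u x :: "'a::real_vector"
  assumes "L = range (\<lambda>c. c *\<^sub>R u)" "x \<in> L" "x \<noteq> 0"
  shows "L = range (\<lambda>c. c *\<^sub>R x)"
proof -
  obtain c0 where c0: "x = c0 *\<^sub>R u" using assms by auto
  have "c0 \<noteq> 0"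
  proof
    assume "c0 = 0" then have "x = 0" using c0 by simp
    then show False using assms(3) by simp
  qed
  show ?thesis
  proof
    show "L \<subseteq> range (\<lambda>c. c *\<^sub>R x)"
    proof
      fix y assume "y \<in> L"
      then obtain c where "y = c *\<^sub>R u" using assms by auto
      then have "y = (c / c0) *\<^sub>R x" using c0 \<open>c0 \<noteq> 0\<close> by simp
      then show "y \<in> range (\<lambda>c. c *\<^sub>R x)" by blast
    qed
    show "range (\<lambda>c. c *\<^sub>R x) \<subseteq> L" using assms c0 by auto
  qed
qed

definition phi :: "frame \<Rightarrow> frame \<Rightarrow> plane_vec \<times> plane_vec" where
  "phi F1 F2 = (vector [fst F1 \<bullet> cdir F1 F2, snd F1 \<bullet> cdir F1 F2],
                vector [fst F2 \<bullet> cdir F1 F2, snd F2 \<bullet> cdir F1 F2])"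

lemma phi_emb:
  assumes F1: "is_frame F1" and F2: "is_frame F2"
  shows "emb F1 (fst (phi F1 F2)) = cdir F1 F2" "emb F2 (snd (phi F1 F2)) = cdir F1 F2"
  using decomp2[OF F1 cdir_perp(1)] decomp2[OF F2 cdir_perp(2)]
  by (simp_all add: phi_def inner_commute)

lemma phi_nz:
  assumes F1: "is_frame F1" and F2: "is_frame F2" and ne: "plane_of F1 \<noteq> plane_of F2"
  shows "phi F1 F2 \<noteq> 0"
  using phi_emb[OF F1 F2] cdir_nz[OF assms]
  by (metis emb_scale fst_zero scale_zero_left)

lemma phi_unique:
  assumes F1: "is_frame F1" and F2: "is_frame F2" and ne: "plane_of F1 \<noteq> plane_of F2"
    and e: "emb F1 v = emb F2 w"
  shows "\<exists>c. (v, w) = c *\<^sub>R phi F1 F2"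
proof -
  have "emb F1 v \<in> plane_of F1 \<inter> plane_of F2" unfolding plane_of_def by (metis IntI rangeI e)
  then obtain c where c: "emb F1 v = c *\<^sub>R cdir F1 F2" using line_eq[OF assms(1-3)] by auto
  have "emb F1 v = emb F1 (c *\<^sub>R fst (phi F1 F2))" using c phi_emb[OF F1 F2] by (simp add: emb_scale)
  then have 1: "v = c *\<^sub>R fst (phi F1 F2)" by (rule emb_inj[OF F1])
  have "emb F2 w = emb F2 (c *\<^sub>R snd (phi F1 F2))" using c e phi_emb[OF F1 F2] by (simp add: emb_scale)
  then have 2: "w = c *\<^sub>R snd (phi F1 F2)" by (rule emb_inj[OF F2])
  show ?thesis using 1 2 by (intro exI[of _ c]) (simp add: prod_eq_iff)
qed

definition std :: frame where "std = (vector [1,0,0], vector [0,1,0])"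

lemma emb_std: "emb std v = vector [v$1, v$2, 0]"
  unfolding emb_def std_def vec_eq_iff forall_3 by simp

definition det2 :: "plane_vec \<Rightarrow> plane_vec \<Rightarrow> real" where
  "det2 p q = p$1 * q$2 - p$2 * q$1"

definition solve :: "plane_vec \<Rightarrow> plane_vec \<Rightarrow> vec3 \<Rightarrow> vec3 \<Rightarrow> frame" where
  "solve p q P Q = ((1 / det2 p q) *\<^sub>R (q$2 *\<^sub>R P - p$2 *\<^sub>R Q),
                    (1 / det2 p q) *\<^sub>R (p$1 *\<^sub>R Q - q$1 *\<^sub>R P))"

lemma solve_unique:
  assumes D: "det2 p q \<noteq> 0" and P: "emb F p = P" and Q: "emb F q = Q"
  shows "solve p q P Q = F"
proof -
  obtain a b where F: "F = (a, b)" by fastforce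
  have P': "P = p$1 *\<^sub>R a + p$2 *\<^sub>R b" and Q': "Q = q$1 *\<^sub>R a + q$2 *\<^sub>R b"
    using P Q F by (auto simp: emb_def)
  have 1: "q$2 *\<^sub>R P - p$2 *\<^sub>R Q = det2 p q *\<^sub>R a"
    unfolding P' Q' det2_def by (simp add: algebra_simps)
  have 2: "p$1 *\<^sub>R Q - q$1 *\<^sub>R P = det2 p q *\<^sub>R b"
    unfolding P' Q' det2_def by (simp add: algebra_simps)
  show ?thesis unfolding solve_def 1 2 F using D by simp
qed

lemma cramer:
  fixes x y :: real
  assumes D: "det2 p q \<noteq> 0" and e1: "p$1 * x + p$2 * y = g" and e2: "q$1 * x + q$2 * y = h"
  shows "x = (q$2 * g - p$2 * h) / det2 p q" "y = (p$1 * h - q$1 * g) / det2 p q"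
  using D unfolding e1[symmetric] e2[symmetric] det2_def
  by (simp_all add: field_simps)

lemma det2_zero:
  assumes "det2 s t = 0" "s \<noteq> 0"
  shows "\<exists>c. t = c *\<^sub>R s"
proof (cases "s$1 = 0")
  case True
  then have "s$2 \<noteq> 0" using assms(2) by (metis exhaust_2 vec_eq_iff zero_index)
  have "t$1 = 0" using assms(1) True \<open>s$2 \<noteq> 0\<close> by (simp add: det2_def)
  show ?thesis
    by (rule exI[of _ "t$2 / s$2"]) (simp add: vec_eq_iff forall_2 True \<open>t$1 = 0\<close> \<open>s$2 \<noteq> 0\<close>)
next
  case False
  have "t$2 = t$1 / s$1 * s$2" using assms(1) False by (simp add: det2_def field_simps)
  then show ?thesis
    by (intro exI[of _ "t$1 / s$1"]) (simp add: vec_eq_iff forall_2 False)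
qed

lemma norm3:
  assumes F: "is_frame F"
  shows "x \<bullet> x = (x \<bullet> fst F)\<^sup>2 + (x \<bullet> snd F)\<^sup>2 + (x \<bullet> nrm F)\<^sup>2"
proof -
  have "x \<bullet> x = x \<bullet> ((x \<bullet> fst F) *\<^sub>R fst F + (x \<bullet> snd F) *\<^sub>R snd F + (x \<bullet> nrm F) *\<^sub>R nrm F)"
    using decomp3[OF F, of x] by simp
  then show ?thesis by (simp add: inner_add_right power2_eq_square)
qed

lemma generic_facts:
  assumes "F \<in> generic N"
  shows "\<And>i. i < N \<Longrightarrow> is_frame (F i)"
    "\<And>i j. i < N \<Longrightarrow> j < N \<Longrightarrow> i \<noteq> j \<Longrightarrow> plane_of (F i) \<noteq> plane_of (F j)"
    "\<And>p q. p \<in> pairs N \<Longrightarrow> q \<in> pairs N \<Longrightarrow> p \<noteq> q \<Longrightarrow>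
         plane_of (F (fst p)) \<inter> plane_of (F (snd p)) \<noteq> plane_of (F (fst q)) \<inter> plane_of (F (snd q))"
    "F \<in> extensional {..<N}"
  using assms unfolding generic_def by (auto simp: PiE_def)

lemma pairs_iff: "(i, j) \<in> pairs N \<longleftrightarrow> i < j \<and> j < N"
  by (simp add: pairs_def)

lemma det_nz:
  assumes gen: "F \<in> generic N" and k: "k < N"
    and p: "p \<in> pairs N" and q: "q \<in> pairs N" and pq: "p \<noteq> q"
    and s: "emb (F k) s \<in> plane_of (F (fst p)) \<inter> plane_of (F (snd p))" "s \<noteq> 0"
    and t: "emb (F k) t \<in> plane_of (F (fst q)) \<inter> plane_of (F (snd q))" "t \<noteq> 0"
  shows "det2 s t \<noteq> 0"
proof
  assume "det2 s t = 0"
  then obtain c where c: "t = c *\<^sub>R s" using det2_zero s(2) by blast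
  note gf = generic_facts[OF gen]
  have Fk: "is_frame (F k)" using gf k by blast
  have pf: "fst p < snd p" "snd p < N" using p by (auto simp: pairs_def)
  have qf: "fst q < snd q" "snd q < N" using q by (auto simp: pairs_def)
  have Lp: "plane_of (F (fst p)) \<inter> plane_of (F (snd p)) = range (\<lambda>c. c *\<^sub>R cdir (F (fst p)) (F (snd p)))"
    using line_eq gf(1,2) pf by (metis less_trans order_less_irrefl)
  have Lq: "plane_of (F (fst q)) \<inter> plane_of (F (snd q)) = range (\<lambda>c. c *\<^sub>R cdir (F (fst q)) (F (snd q)))"
    using line_eq gf(1,2) qf by (metis less_trans order_less_irrefl)
  have es: "emb (F k) s \<noteq> 0" using s(2) emb_inj[OF Fk, of s 0] by (auto simp: emb_def)
  have et: "emb (F k) t \<noteq> 0" using t(2) emb_inj[OF Fk, of t 0] by (auto simp: emb_def)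
  have "emb (F k) t \<in> plane_of (F (fst p)) \<inter> plane_of (F (snd p))"
    using s(1) unfolding Lp c emb_scale by auto
  then have "plane_of (F (fst p)) \<inter> plane_of (F (snd p)) = range (\<lambda>c. c *\<^sub>R emb (F k) t)"
    using line_span[OF Lp _ et] by blast
  moreover have "plane_of (F (fst q)) \<inter> plane_of (F (snd q)) = range (\<lambda>c. c *\<^sub>R emb (F k) t)"
    using line_span[OF Lq t(1) et] .
  ultimately show False using gf(3)[OF p q pq] by simp
qed

type_synonym reps = "nat \<times> nat \<Rightarrow> plane_vec \<times> plane_vec"

definition gg :: "reps \<Rightarrow> real" where "gg R = snd (R (0,1)) \<bullet> fst (R (1,2))"
definition hh :: "reps \<Rightarrow> real" where "hh R = snd (R (0,2)) \<bullet> snd (R (1,2))"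
definition alp :: "reps \<Rightarrow> real" where
  "alp R = (fst (R (0,2)) $ 2 * gg R - fst (R (0,1)) $ 2 * hh R) / det2 (fst (R (0,1))) (fst (R (0,2)))"
definition bet :: "reps \<Rightarrow> real" where
  "bet R = (fst (R (0,1)) $ 1 * hh R - fst (R (0,2)) $ 1 * gg R) / det2 (fst (R (0,1))) (fst (R (0,2)))"
definition Zp :: "reps \<Rightarrow> vec3" where
  "Zp R = vector [alp R, bet R, sqrt (fst (R (1,2)) \<bullet> fst (R (1,2)) - (alp R)\<^sup>2 - (bet R)\<^sup>2)]"
definition F1p :: "reps \<Rightarrow> frame" where
  "F1p R = solve (snd (R (0,1))) (fst (R (1,2))) (emb std (fst (R (0,1)))) (Zp R)"
definition Fkp :: "reps \<Rightarrow> nat \<Rightarrow> frame" where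
  "Fkp R k = solve (snd (R (0,k))) (snd (R (1,k))) (emb std (fst (R (0,k)))) (emb (F1p R) (fst (R (1,k))))"
definition Psi :: "reps \<Rightarrow> nat \<Rightarrow> frame" where
  "Psi R k = (if k = 0 then std else if k = 1 then F1p R else Fkp R k)"

definition good_reps :: "nat \<Rightarrow> (nat \<Rightarrow> frame) \<Rightarrow> reps \<Rightarrow> bool" where
  "good_reps N F R \<longleftrightarrow> (\<forall>p\<in>pairs N. R p \<noteq> 0 \<and> emb (F (fst p)) (fst (R p)) = emb (F (snd p)) (snd (R p)))"

lemma rep_facts:
  assumes gen: "F \<in> generic N" and R: "good_reps N F R" and p: "(i, j) \<in> pairs N"
  shows "fst (R (i,j)) \<noteq> 0" "snd (R (i,j)) \<noteq> 0"
    "emb (F i) (fst (R (i,j))) \<in> plane_of (F i) \<inter> plane_of (F j)"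
    "emb (F j) (snd (R (i,j))) \<in> plane_of (F i) \<inter> plane_of (F j)"
proof -
  note gf = generic_facts[OF gen]
  have ij: "i < N" "j < N" using p by (auto simp: pairs_def)
  have Fi: "is_frame (F i)" and Fj: "is_frame (F j)" using gf(1) ij by auto
  have nz: "R (i,j) \<noteq> 0" and e: "emb (F i) (fst (R (i,j))) = emb (F j) (snd (R (i,j)))"
    using R p unfolding good_reps_def by auto
  have z: "emb G 0 = 0" for G by (simp add: emb_def)
  show "fst (R (i,j)) \<noteq> 0"
  proof
    assume "fst (R (i,j)) = 0"
    then have "snd (R (i,j)) = 0" using e emb_inj[OF Fj, of "snd (R (i,j))" 0] z by simp
    then show False using nz \<open>fst (R (i,j)) = 0\<close> by (simp add: prod_eq_iff)
  qed
  show "snd (R (i,j)) \<noteq> 0"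
  proof
    assume "snd (R (i,j)) = 0"
    then have "fst (R (i,j)) = 0" using e emb_inj[OF Fi, of "fst (R (i,j))" 0] z by simp
    then show False using nz \<open>snd (R (i,j)) = 0\<close> by (simp add: prod_eq_iff)
  qed
  show "emb (F i) (fst (R (i,j))) \<in> plane_of (F i) \<inter> plane_of (F j)"
    "emb (F j) (snd (R (i,j))) \<in> plane_of (F i) \<inter> plane_of (F j)"
    unfolding plane_of_def using e by (metis IntI rangeI)+
qed

lemma dets_nz:
  assumes gen: "F \<in> generic N" and N: "N \<ge> 3" and R: "good_reps N F R"
  shows "det2 (fst (R (0,1))) (fst (R (0,2))) \<noteq> 0"
    "det2 (snd (R (0,1))) (fst (R (1,2))) \<noteq> 0"
    "\<And>k. 2 \<le> k \<Longrightarrow> k < N \<Longrightarrow> det2 (snd (R (0,k))) (snd (R (1,k))) \<noteq> 0"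
proof -
  have p01: "(0,1) \<in> pairs N" and p02: "(0,2) \<in> pairs N" and p12: "(1,2) \<in> pairs N"
    using N by (auto simp: pairs_def)
  note r01 = rep_facts[OF gen R p01] and r02 = rep_facts[OF gen R p02] and r12 = rep_facts[OF gen R p12]
  show "det2 (fst (R (0,1))) (fst (R (0,2))) \<noteq> 0"
    using det_nz[OF gen _ p01 p02, of 0] r01 r02 N by simp
  show "det2 (snd (R (0,1))) (fst (R (1,2))) \<noteq> 0"
    using det_nz[OF gen _ p01 p12, of 1] r01 r12 N by simp
  fix k assume k: "2 \<le> k" "k < N"
  have p0k: "(0,k) \<in> pairs N" and p1k: "(1,k) \<in> pairs N" using k by (auto simp: pairs_def)
  show "det2 (snd (R (0,k))) (snd (R (1,k))) \<noteq> 0"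
    using det_nz[OF gen _ p0k p1k, of k] rep_facts[OF gen R p0k] rep_facts[OF gen R p1k] k by simp
qed

lemma rigidity:
  assumes gen: "F \<in> generic N" and N: "N \<ge> 3" and R: "good_reps N F R"
  shows "\<exists>A. orthogonal_matrix A \<and> (\<forall>k<N. Psi R k = act A (F k))"
proof -
  note gf = generic_facts[OF gen]
  have p01: "(0,1) \<in> pairs N" and p02: "(0,2) \<in> pairs N" and p12: "(1,2) \<in> pairs N"
    using N by (auto simp: pairs_def)
  have F0: "is_frame (F 0)" and F1: "is_frame (F 1)" and F2: "is_frame (F 2)" using gf(1) N by auto
  have e: "emb (F i) (fst (R (i,j))) = emb (F j) (snd (R (i,j)))" if "(i,j) \<in> pairs N" for i j
    using R that unfolding good_reps_def by auto
  note D = dets_nz[OF gen N R]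
  define a where "a = fst (F 0)"
  define b where "b = snd (F 0)"
  define n where "n = nrm (F 0)"
  define Z where "Z = emb (F 1) (fst (R (1,2)))"
  define \<sigma> :: real where "\<sigma> = (if Z \<bullet> n \<ge> 0 then 1 else -1)"
  define A :: "real^3^3" where "A = vector [a, b, \<sigma> *\<^sub>R n]"
  have ff: "a \<bullet> a = 1" "b \<bullet> b = 1" "a \<bullet> b = 0" "b \<bullet> a = 0" "n \<bullet> n = 1" "n \<bullet> a = 0" "n \<bullet> b = 0"
      "a \<bullet> n = 0" "b \<bullet> n = 0"
    using frame_facts[OF F0] nrm_facts[OF F0] by (auto simp: a_def b_def n_def)
  have \<sigma>2: "\<sigma> * \<sigma> = 1" by (simp add: \<sigma>_def)
  have Av: "A *v x = vector [a \<bullet> x, b \<bullet> x, \<sigma> * (n \<bullet> x)]" for x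
    unfolding vec_eq_iff forall_3 by (simp add: matrix_vector_mul_component A_def)
  have rows: "row 1 A = a" "row 2 A = b" "row 3 A = \<sigma> *\<^sub>R n"
    by (simp_all add: row_def A_def vec_lambda_eta vec_eq_iff)
  have orth: "orthogonal_matrix A"
    unfolding orthogonal_matrix_orthonormal_rows
  proof (intro conjI allI impI)
    fix i :: 3 show "norm (row i A) = 1"
      using exhaust_3[of i] rows ff \<sigma>2 by (auto simp: norm_eq_1)
  next
    fix i j :: 3 assume "i \<noteq> j"
    then show "orthogonal (row i A) (row j A)"
      using exhaust_3[of i] exhaust_3[of j] rows ff by (auto simp: orthogonal_def inner_commute)
  qed
  have A0: "A *v emb (F 0) v = emb std v" for v
    unfolding Av emb_std using ff
    by (simp add: emb_def a_def[symmetric] b_def[symmetric] inner_add_right)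
  define v01 where "v01 = fst (R (0,1))"
  define v02 where "v02 = fst (R (0,2))"
  define w01 where "w01 = snd (R (0,1))"
  define w02 where "w02 = snd (R (0,2))"
  define v12 where "v12 = fst (R (1,2))"
  define w12 where "w12 = snd (R (1,2))"
  have XZ: "emb (F 0) v01 \<bullet> Z = gg R"
    using e[OF p01] emb_inner[OF F1] by (simp add: gg_def Z_def v01_def)
  have YZ: "emb (F 0) v02 \<bullet> Z = hh R"
  proof -
    have "Z = emb (F 2) w12" using e[OF p12] by (simp add: Z_def w12_def)
    then show ?thesis using e[OF p02] emb_inner[OF F2] by (simp add: hh_def v02_def w02_def w12_def)
  qed
  have lin: "emb (F 0) v \<bullet> Z = v$1 * (a \<bullet> Z) + v$2 * (b \<bullet> Z)" for v
    by (simp add: emb_def a_def b_def inner_add_left)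
  have D0: "det2 v01 v02 \<noteq> 0" using D(1) by (simp add: v01_def v02_def)
  have aZ: "a \<bullet> Z = alp R" and bZ: "b \<bullet> Z = bet R"
    using cramer[OF D0, of "a \<bullet> Z" "b \<bullet> Z" "gg R" "hh R"] XZ YZ lin
    by (simp_all add: alp_def bet_def v01_def v02_def)
  have ZZ: "Z \<bullet> Z = v12 \<bullet> v12" using emb_inner[OF F1] by (simp add: Z_def v12_def)
  have "Z \<bullet> Z = (a \<bullet> Z)\<^sup>2 + (b \<bullet> Z)\<^sup>2 + (n \<bullet> Z)\<^sup>2"
    using norm3[OF F0, of Z] by (simp add: a_def b_def n_def inner_commute)
  then have "sqrt (v12 \<bullet> v12 - (alp R)\<^sup>2 - (bet R)\<^sup>2) = \<bar>n \<bullet> Z\<bar>"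
    using ZZ aZ bZ by simp
  also have "\<dots> = \<sigma> * (n \<bullet> Z)" by (simp add: \<sigma>_def inner_commute)
  finally have AZ: "A *v Z = Zp R"
    unfolding Av Zp_def using aZ bZ by (simp add: v12_def)
  have A1: "act A (F 1) = F1p R"
  proof -
    have "emb (act A (F 1)) w01 = emb std v01"
      unfolding act_emb using e[OF p01] A0 by (metis w01_def v01_def)
    moreover have "emb (act A (F 1)) v12 = Zp R"
      unfolding act_emb using AZ by (simp add: Z_def v12_def)
    moreover have "det2 w01 v12 \<noteq> 0" using D(2) by (simp add: w01_def v12_def)
    ultimately show ?thesis
      unfolding F1p_def using solve_unique by (simp add: w01_def v12_def v01_def)
  qed
  have Ak: "act A (F k) = Fkp R k" if k: "2 \<le> k" "k < N" for k
  proof -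
    have p0k: "(0,k) \<in> pairs N" and p1k: "(1,k) \<in> pairs N" using k by (auto simp: pairs_def)
    have "emb (act A (F k)) (snd (R (0,k))) = emb std (fst (R (0,k)))"
      unfolding act_emb using e[OF p0k] A0 by metis
    moreover have "emb (act A (F k)) (snd (R (1,k))) = emb (F1p R) (fst (R (1,k)))"
      unfolding act_emb using e[OF p1k] A1[symmetric] by (simp add: act_emb)
    ultimately show ?thesis
      unfolding Fkp_def using solve_unique D(3)[OF k] by simp
  qed
  have A0': "act A (F 0) = std"
  proof -
    have "emb (act A (F 0)) (vector [1,0]) = emb std (vector [1,0])"
         "emb (act A (F 0)) (vector [0,1]) = emb std (vector [0,1])"
      unfolding act_emb A0 by simp_all
    then show ?thesis by (simp add: emb_def prod_eq_iff)
  qed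
  show ?thesis
    by (rule exI[of _ A]) (use orth A0' A1 Ak in \<open>auto simp: Psi_def\<close>)
qed

definition cls :: "plane_vec \<times> plane_vec \<Rightarrow> (plane_vec \<times> plane_vec) set" where
  "cls x = proj_rel `` {x}"

lemma cls_mem: "x \<noteq> 0 \<Longrightarrow> y \<in> cls x \<longleftrightarrow> (\<exists>c. c \<noteq> 0 \<and> y = c *\<^sub>R x)"
  by (auto simp: cls_def proj_rel_def)

lemma cls_self: "x \<noteq> 0 \<Longrightarrow> x \<in> cls x"
  by (auto simp: cls_mem intro: exI[of _ 1])

lemma cls_scale: "x \<noteq> 0 \<Longrightarrow> c \<noteq> 0 \<Longrightarrow> cls (c *\<^sub>R x) = cls x"
proof -
  assume x: "x \<noteq> 0" and c: "c \<noteq> 0"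
  then have cx: "c *\<^sub>R x \<noteq> 0" by simp
  show ?thesis
  proof (rule set_eqI)
    fix y
    show "y \<in> cls (c *\<^sub>R x) \<longleftrightarrow> y \<in> cls x"
      unfolding cls_mem[OF x] cls_mem[OF cx]
    proof
      assume "\<exists>d. d \<noteq> 0 \<and> y = d *\<^sub>R c *\<^sub>R x"
      then obtain d where "d \<noteq> 0" "y = d *\<^sub>R c *\<^sub>R x" by blast
      then show "\<exists>d. d \<noteq> 0 \<and> y = d *\<^sub>R x" using c by (intro exI[of _ "d * c"]) simp
    next
      assume "\<exists>d. d \<noteq> 0 \<and> y = d *\<^sub>R x"
      then obtain d where "d \<noteq> 0" "y = d *\<^sub>R x" by blast
      then show "\<exists>d. d \<noteq> 0 \<and> y = d *\<^sub>R c *\<^sub>R x" using c by (intro exI[of _ "d / c"]) simp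
    qed
  qed
qed

lemma cls_eq: "x \<noteq> 0 \<Longrightarrow> y \<in> cls x \<Longrightarrow> cls y = cls x"
  using cls_mem cls_scale by metis

lemma cls_nz: "x \<noteq> 0 \<Longrightarrow> y \<in> cls x \<Longrightarrow> y \<noteq> 0"
  using cls_mem by fastforce

lemma topspace_RP3: "topspace RP3 = cls ` (- {0})"
  unfolding RP3_def topspace_quot by (simp add: cls_def)

lemma RP3_elem: "c \<in> topspace RP3 \<Longrightarrow> \<exists>x. x \<noteq> 0 \<and> c = cls x"
  unfolding topspace_RP3 by auto

lemma topspace_CL: "topspace (CL_top N) = PiE (pairs N) (\<lambda>_. topspace RP3)"
  by (simp add: CL_top_def)

definition PhiT :: "nat \<Rightarrow> (nat \<Rightarrow> frame) \<Rightarrow> nat \<times> nat \<Rightarrow> (plane_vec \<times> plane_vec) set" where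
  "PhiT N F = restrict (\<lambda>p. cls (phi (F (fst p)) (F (snd p)))) (pairs N)"

lemma pair_facts:
  assumes gen: "F \<in> generic N" and p: "(i,j) \<in> pairs N"
  shows "is_frame (F i)" "is_frame (F j)" "plane_of (F i) \<noteq> plane_of (F j)"
  using generic_facts[OF gen] p by (auto simp: pairs_def)

lemma realizes_Phi: "F \<in> generic N \<Longrightarrow> realizes N F (PhiT N F)"
  unfolding realizes_def
proof (intro ballI, clarify)
  fix i j assume gen: "F \<in> generic N" and p: "(i,j) \<in> pairs N"
  note pf = pair_facts[OF gen p]
  have "phi (F i) (F j) \<in> PhiT N F (i,j)"
    using p cls_self[OF phi_nz[OF pf]] by (simp add: PhiT_def)
  moreover have "emb (F i) (fst (phi (F i) (F j))) = emb (F j) (snd (phi (F i) (F j)))"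
    using phi_emb[OF pf(1,2)] by simp
  ultimately show "\<exists>(v, w)\<in>PhiT N F (i, j). emb (F i) v = emb (F j) w" by fastforce
qed

lemma PhiT_top: "F \<in> generic N \<Longrightarrow> PhiT N F \<in> topspace (CL_top N)"
  unfolding topspace_CL topspace_RP3 PiE_iff
proof (intro conjI ballI)
  fix p assume gen: "F \<in> generic N" and p: "p \<in> pairs N"
  obtain i j where ij: "p = (i,j)" by (cases p)
  have "phi (F i) (F j) \<noteq> 0" using phi_nz pair_facts[OF gen p[unfolded ij]] by blast
  then show "PhiT N F p \<in> cls ` (- {0})" using p ij by (simp add: PhiT_def)
next
  show "PhiT N F \<in> extensional (pairs N)" by (simp add: PhiT_def)
qed

lemma realizes_all:
  assumes d: "d \<in> topspace (CL_top N)" and r: "realizes N F d" and p: "(i,j) \<in> pairs N"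
    and y: "y \<in> d (i,j)"
  shows "emb (F i) (fst y) = emb (F j) (snd y)" "y \<noteq> 0"
proof -
  have "d (i,j) \<in> topspace RP3" using d p by (auto simp: topspace_CL PiE_iff)
  then obtain x where x: "x \<noteq> 0" "d (i,j) = cls x" using RP3_elem by blast
  obtain v w where vw: "(v,w) \<in> d (i,j)" "emb (F i) v = emb (F j) w"
    using r p unfolding realizes_def by fastforce
  obtain c where c: "c \<noteq> 0" "(v,w) = c *\<^sub>R x" using vw(1) x cls_mem by auto
  obtain c' where c': "c' \<noteq> 0" "y = c' *\<^sub>R x" using y x cls_mem by auto
  have "y = (c' / c) *\<^sub>R (v,w)" using c c' by simp
  then show "emb (F i) (fst y) = emb (F j) (snd y)" using vw(2) by (simp add: emb_scale)
  show "y \<noteq> 0" using c' x by simp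
qed

lemma realizes_unique:
  assumes gen: "F \<in> generic N" and d: "d \<in> topspace (CL_top N)" and r: "realizes N F d"
  shows "d = PhiT N F"
proof (rule ext)
  fix p
  show "d p = PhiT N F p"
  proof (cases "p \<in> pairs N")
    case False
    have "d p = undefined" using PiE_arb[OF d[unfolded topspace_CL] False] .
    then show ?thesis using False by (simp add: PhiT_def)
  next
    case True
    then obtain i j where p: "p = (i,j)" "(i,j) \<in> pairs N" by (cases p) auto
    note pf = pair_facts[OF gen p(2)]
    have "d (i,j) \<in> topspace RP3" using d p by (auto simp: topspace_CL PiE_iff)
    then obtain x where x: "x \<noteq> 0" "d (i,j) = cls x" using RP3_elem by blast
    have xe: "emb (F i) (fst x) = emb (F j) (snd x)"
      using realizes_all[OF d r p(2)] cls_self[OF x(1)] x(2) by simp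
    obtain c where c: "(fst x, snd x) = c *\<^sub>R phi (F i) (F j)"
      using phi_unique[OF pf xe] by blast
    then have "x = c *\<^sub>R phi (F i) (F j)" by simp
    then have "c \<noteq> 0" using x(1) by auto
    have "d (i,j) = cls (phi (F i) (F j))"
      using x \<open>x = _\<close> cls_scale[OF phi_nz[OF pf] \<open>c \<noteq> 0\<close>] by simp
    then show ?thesis using p by (simp add: PhiT_def)
  qed
qed

lemma Phi_valid: 
  assumes gen: "F \<in> generic N"
  shows "PhiT N F \<in> valid_CL N"
proof -
  have 1: "PhiT N F \<in> topspace (CL_top N)" using PhiT_top[OF gen] .
  have 2: "\<exists>G\<in>generic N. realizes N G (PhiT N F)" using gen realizes_Phi by blast
  have 3: "(norm v)\<^sup>2 = (norm w)\<^sup>2" if p: "p \<in> pairs N" and vw: "(v,w) \<in> PhiT N F p" for p v w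
  proof -
    obtain i j where ij: "p = (i,j)" by (cases p)
    note pf = pair_facts[OF gen p[unfolded ij]]
    have "(v,w) \<in> cls (phi (F i) (F j))" using vw p ij by (simp add: PhiT_def)
    then obtain c where "(v,w) = c *\<^sub>R phi (F i) (F j)" using cls_mem phi_nz[OF pf] by blast
    then have "v = c *\<^sub>R fst (phi (F i) (F j))" "w = c *\<^sub>R snd (phi (F i) (F j))" by (simp_all add: prod_eq_iff)
    moreover have "norm (fst (phi (F i) (F j))) = norm (snd (phi (F i) (F j)))"
      using emb_norm[OF pf(1), of "fst (phi (F i) (F j))"] emb_norm[OF pf(2), of "snd (phi (F i) (F j))"] phi_emb[OF pf(1,2)] by simp
    ultimately show "(norm v)\<^sup>2 = (norm w)\<^sup>2" by simp
  qed
  have h3: "\<forall>p\<in>pairs N. \<forall>(v, w)\<in>PhiT N F p. (norm v)\<^sup>2 = (norm w)\<^sup>2"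
    using 3 by auto
  show ?thesis unfolding valid_CL_def mem_Collect_eq by (rule conjI[OF 1 conjI[OF h3 2]])
qed

lemma generic_act:
  assumes gen: "F \<in> generic N" and A: "orthogonal_matrix A"
  shows "restrict (\<lambda>i. act A (F i)) {..<N} \<in> generic N"
proof -
  note gf = generic_facts[OF gen]
  have inj: "inj (\<lambda>x. A *v x)" using orth_inj[OF A] by (auto simp: inj_def)
  show ?thesis
    unfolding generic_def
  proof (intro CollectI conjI allI impI ballI)
    show "restrict (\<lambda>i. act A (F i)) {..<N} \<in> {..<N} \<rightarrow>\<^sub>E UNIV" by simp
    fix i assume "i < N"
    then show "is_frame (restrict (\<lambda>i. act A (F i)) {..<N} i)" using act_frame[OF A] gf(1) by simp
  next
    fix i j assume ij: "i < N" "j < N" "i \<noteq> j"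
    have e: "restrict (\<lambda>i. act A (F i)) {..<N} i = act A (F i)" "restrict (\<lambda>i. act A (F i)) {..<N} j = act A (F j)"
      using ij by simp_all
    show "plane_of (restrict (\<lambda>i. act A (F i)) {..<N} i) \<noteq> plane_of (restrict (\<lambda>i. act A (F i)) {..<N} j)"
      unfolding e act_plane inj_image_eq_iff[OF inj] using gf(2)[OF ij] .
  next
    fix p q assume pq: "p \<in> pairs N" "q \<in> pairs N" "p \<noteq> q"
    have lt: "fst p < N" "snd p < N" "fst q < N" "snd q < N" using pq by (auto simp: pairs_def)
    then have m: "fst p \<in> {..<N}" "snd p \<in> {..<N}" "fst q \<in> {..<N}" "snd q \<in> {..<N}" by simp_all
    show "plane_of (restrict (\<lambda>i. act A (F i)) {..<N} (fst p)) \<inter> plane_of (restrict (\<lambda>i. act A (F i)) {..<N} (snd p)) \<noteq>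
          plane_of (restrict (\<lambda>i. act A (F i)) {..<N} (fst q)) \<inter> plane_of (restrict (\<lambda>i. act A (F i)) {..<N} (snd q))"
      unfolding restrict_apply' [OF m(1)] restrict_apply' [OF m(2)] restrict_apply' [OF m(3)] restrict_apply' [OF m(4)]
        act_plane image_Int[OF inj, symmetric] inj_image_eq_iff[OF inj]
      using gf(3)[OF pq] .
  qed
qed

lemma realizes_act:
  assumes "realizes N F d" "\<And>i. i < N \<Longrightarrow> F' i = act A (F i)"
  shows "realizes N F' d"
  unfolding realizes_def
proof (intro ballI)
  fix p assume p: "p \<in> pairs N"
  obtain i j where ij: "p = (i,j)" by (cases p)
  have lt: "i < N" "j < N" using p ij by (auto simp: pairs_def)
  obtain v w where vw: "(v,w) \<in> d (i,j)" "emb (F i) v = emb (F j) w"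
    using assms(1) p ij unfolding realizes_def by fastforce
  have "emb (F' i) v = emb (F' j) w" using vw(2) assms(2)[OF lt(1)] assms(2)[OF lt(2)] by (simp add: act_emb)
  then show "case p of (i, j) \<Rightarrow> \<exists>(v, w)\<in>d (i, j). emb (F' i) v = emb (F' j) w"
    using vw(1) ij by blast
qed

lemma O3_refl: "F \<in> generic N \<Longrightarrow> (F, F) \<in> O3_rel N"
  unfolding O3_rel_def by (auto intro!: exI[of _ "mat 1"] simp: act_id orthogonal_matrix_id)

lemma O3_sym: assumes "(F, F') \<in> O3_rel N" shows "(F', F) \<in> O3_rel N"
proof -
  from assms obtain A where "F \<in> generic N" "F' \<in> generic N" "orthogonal_matrix A" "\<forall>i<N. F' i = act A (F i)"
    unfolding O3_rel_def by blast
  then show ?thesis unfolding O3_rel_def by (auto intro!: exI[of _ "transpose A"] simp: act_inv)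
qed

lemma O3_trans: assumes "(F, F') \<in> O3_rel N" "(F', F'') \<in> O3_rel N" shows "(F, F'') \<in> O3_rel N"
proof -
  from assms obtain A B where "F \<in> generic N" "F' \<in> generic N" "F'' \<in> generic N" "orthogonal_matrix A" "\<forall>i<N. F' i = act A (F i)"
    "orthogonal_matrix B" "\<forall>i<N. F'' i = act B (F' i)"
    unfolding O3_rel_def by blast
  then show ?thesis unfolding O3_rel_def by (auto intro!: exI[of _ "B ** A"] simp: act_comp orthogonal_matrix_mul)
qed

lemma O3_cls_eq: "(F, F') \<in> O3_rel N \<Longrightarrow> O3_rel N `` {F} = O3_rel N `` {F'}"
  using O3_sym O3_trans by blast

lemma cm1:
  assumes f: "continuous_map X euclidean f" and h: "continuous_on UNIV h"
  shows "continuous_map X euclidean (\<lambda>x. h (f x))"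
  using continuous_map_compose[OF f, of euclidean h] h by (simp add: o_def)

lemma cm2:
  assumes f: "continuous_map X euclidean f" and g: "continuous_map X euclidean g"
    and h: "continuous_on UNIV (\<lambda>z. h (fst z) (snd z))"
  shows "continuous_map X euclidean (\<lambda>x. h (f x) (g x))"
proof -
  have "continuous_map X euclidean (\<lambda>x. (f x, g x))"
    using continuous_map_pairedI[OF f g] by simp
  from cm1[OF this h] show ?thesis by simp
qed

lemma cm_fst: "continuous_map X euclidean f \<Longrightarrow> continuous_map X euclidean (\<lambda>x. fst (f x))"
  by (rule cm1) (auto intro: continuous_intros)
lemma cm_snd: "continuous_map X euclidean f \<Longrightarrow> continuous_map X euclidean (\<lambda>x. snd (f x))"
  by (rule cm1) (auto intro: continuous_intros)
lemma cm_nth: "continuous_map X euclidean f \<Longrightarrow> continuous_map X euclidean (\<lambda>x. f x $ i)"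
  by (rule cm1[where h = "\<lambda>v. v $ i"]) (auto intro: continuous_intros)
lemma cm_inner: "continuous_map X euclidean f \<Longrightarrow> continuous_map X euclidean g \<Longrightarrow>
   continuous_map X euclidean (\<lambda>x. inner (f x) (g x :: 'a::real_inner))"
  by (rule cm2[where h = inner], assumption, assumption) (intro continuous_on_inner continuous_on_fst continuous_on_snd continuous_on_id)
lemma cm_scaleR: "continuous_map X euclidean f \<Longrightarrow> continuous_map X euclidean g \<Longrightarrow>
   continuous_map X euclidean (\<lambda>x. f x *\<^sub>R (g x :: 'a::real_normed_vector))"
  by (rule cm2[where h = scaleR], assumption, assumption) (intro continuous_on_scaleR continuous_on_fst continuous_on_snd continuous_on_id)
lemma cm_sqrt: "continuous_map X euclidean f \<Longrightarrow> continuous_map X euclidean (\<lambda>x. sqrt (f x))"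
  by (rule cm1) (auto intro: continuous_intros)
lemma cm_pair: "continuous_map X euclidean f \<Longrightarrow> continuous_map X euclidean g \<Longrightarrow>
   continuous_map X euclidean (\<lambda>x. (f x, g x))"
  using continuous_map_pairedI[of X euclidean f euclidean g] by simp

lemma vec2_lambda: "(vector [a, b] :: 'a::zero^2) = (\<chi> i. if i = 1 then a else b)"
  unfolding vec_eq_iff forall_2 by simp
lemma vec3_lambda: "(vector [a, b, c] :: 'a::zero^3) = (\<chi> i. if i = 1 then a else if i = 2 then b else c)"
  unfolding vec_eq_iff forall_3 by simp

lemma cm_vec2: "continuous_map X euclidean f \<Longrightarrow> continuous_map X euclidean g \<Longrightarrow>
   continuous_map X euclidean (\<lambda>x. vector [f x, g x] :: real^2)"
proof (rule cm2[where h = "\<lambda>a b. vector [a, b]"])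
  show "continuous_on UNIV (\<lambda>z. vector [fst z, snd z] :: real^2)"
    unfolding vec2_lambda
  proof (intro continuous_on_vec_lambda)
    fix i :: 2 show "continuous_on UNIV (\<lambda>z::real\<times>real. if i = 1 then fst z else snd z)"
      by (cases "i = 1") (auto intro: continuous_intros)
  qed
qed

lemma cm_vec3: "continuous_map X euclidean f \<Longrightarrow> continuous_map X euclidean g \<Longrightarrow> continuous_map X euclidean h \<Longrightarrow>
   continuous_map X euclidean (\<lambda>x. vector [f x, g x, h x] :: real^3)"
proof -
  assume f: "continuous_map X euclidean f" and g: "continuous_map X euclidean g" and h: "continuous_map X euclidean h"
  have "continuous_map X euclidean (\<lambda>x. (f x, (g x, h x)))" by (intro cm_pair f g h)
  moreover have "continuous_on UNIV (\<lambda>z::real\<times>real\<times>real. vector [fst z, fst (snd z), snd (snd z)] :: real^3)"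
    unfolding vec3_lambda
  proof (intro continuous_on_vec_lambda)
    fix i :: 3 show "continuous_on UNIV (\<lambda>z::real\<times>real\<times>real. if i = 1 then fst z else if i = 2 then fst (snd z) else snd (snd z))"
      by (cases "i = 1"; cases "i = 2") (auto intro!: continuous_on_fst continuous_on_snd continuous_on_id)
  qed
  ultimately show ?thesis using cm1 by fastforce
qed

lemma cm_emb: "continuous_map X euclidean F \<Longrightarrow> continuous_map X euclidean v \<Longrightarrow>
   continuous_map X euclidean (\<lambda>x. emb (F x) (v x))"
  unfolding emb_def by (intro continuous_map_add cm_scaleR cm_nth cm_fst cm_snd)

lemma cm_det2: "continuous_map X euclidean p \<Longrightarrow> continuous_map X euclidean q \<Longrightarrow>
   continuous_map X euclidean (\<lambda>x. det2 (p x) (q x))"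
  unfolding det2_def by (intro continuous_map_diff continuous_map_real_mult cm_nth)

lemma cm_solve:
  assumes "continuous_map X euclidean p" "continuous_map X euclidean q"
    "continuous_map X euclidean P" "continuous_map X euclidean Q"
    "\<And>x. x \<in> topspace X \<Longrightarrow> det2 (p x) (q x) \<noteq> 0"
  shows "continuous_map X euclidean (\<lambda>x. solve (p x) (q x) (P x) (Q x))"
  unfolding solve_def
  by (intro cm_pair cm_scaleR continuous_map_real_divide continuous_map_diff cm_det2 cm_nth
      continuous_map_canonical_const assms)

lemma cm_cross: "continuous_map X euclidean f \<Longrightarrow> continuous_map X euclidean g \<Longrightarrow>
   continuous_map X euclidean (\<lambda>x. cross3 (f x) (g x))"
  by (rule cm2[where h = cross3], assumption, assumption) (intro continuous_on_cross continuous_on_fst continuous_on_snd continuous_on_id)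

lemma cm_proj: "i < N \<Longrightarrow> continuous_map (frames_top N) euclidean (\<lambda>F. F i)"
  unfolding frames_top_def using continuous_map_product_projection[of i "{..<N}" "\<lambda>_. euclidean"] by simp

lemma cm_phi: "i < N \<Longrightarrow> j < N \<Longrightarrow> continuous_map (frames_top N) euclidean (\<lambda>F. phi (F i) (F j))"
  unfolding phi_def cdir_def nrm_def
  by (intro cm_pair cm_vec2 cm_inner cm_cross cm_fst cm_snd cm_proj)

section \<open>Continuity of the reconstruction\<close>

locale cmR =
  fixes X :: "'x topology" and Rf :: "'x \<Rightarrow> reps"
  assumes cR: "\<And>p. continuous_map X euclidean (\<lambda>x. Rf x p)"
begin

lemma cm_Zp:
  assumes "\<And>x. x \<in> topspace X \<Longrightarrow> det2 (fst (Rf x (0,1))) (fst (Rf x (0,2))) \<noteq> 0"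
  shows "continuous_map X euclidean (\<lambda>x. Zp (Rf x))"
  unfolding Zp_def alp_def bet_def gg_def hh_def
  by (intro cm_vec3 continuous_map_real_divide continuous_map_diff continuous_map_real_mult cm_sqrt
      continuous_map_real_pow cm_inner cm_det2 cm_nth cm_fst cm_snd cR assms)

lemma cm_F1p:
  assumes "\<And>x. x \<in> topspace X \<Longrightarrow> det2 (fst (Rf x (0,1))) (fst (Rf x (0,2))) \<noteq> 0"
    "\<And>x. x \<in> topspace X \<Longrightarrow> det2 (snd (Rf x (0,1))) (fst (Rf x (1,2))) \<noteq> 0"
  shows "continuous_map X euclidean (\<lambda>x. F1p (Rf x))"
  unfolding F1p_def
  by (intro cm_solve cm_Zp cm_emb cm_fst cm_snd cR assms continuous_map_canonical_const)

lemma cm_Fkp: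
  assumes "\<And>x. x \<in> topspace X \<Longrightarrow> det2 (fst (Rf x (0,1))) (fst (Rf x (0,2))) \<noteq> 0"
    "\<And>x. x \<in> topspace X \<Longrightarrow> det2 (snd (Rf x (0,1))) (fst (Rf x (1,2))) \<noteq> 0"
    "\<And>x. x \<in> topspace X \<Longrightarrow> det2 (snd (Rf x (0,k))) (snd (Rf x (1,k))) \<noteq> 0"
  shows "continuous_map X euclidean (\<lambda>x. Fkp (Rf x) k)"
  unfolding Fkp_def
  by (intro cm_solve cm_F1p cm_emb cm_fst cm_snd cR assms continuous_map_canonical_const)

lemma cm_Psi:
  assumes "\<And>x. x \<in> topspace X \<Longrightarrow> det2 (fst (Rf x (0,1))) (fst (Rf x (0,2))) \<noteq> 0"
    "\<And>x. x \<in> topspace X \<Longrightarrow> det2 (snd (Rf x (0,1))) (fst (Rf x (1,2))) \<noteq> 0"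
    "2 \<le> k \<Longrightarrow> (\<And>x. x \<in> topspace X \<Longrightarrow> det2 (snd (Rf x (0,k))) (snd (Rf x (1,k))) \<noteq> 0)"
  shows "continuous_map X euclidean (\<lambda>x. Psi (Rf x) k)"
proof (cases "k = 0")
  case True then show ?thesis by (simp add: Psi_def)
next
  case False
  show ?thesis
  proof (cases "k = 1")
    case True then show ?thesis using cm_F1p assms by (simp add: Psi_def)
  next
    case False
    then have "2 \<le> k" using \<open>k \<noteq> 0\<close> by simp
    then show ?thesis using cm_Fkp[of k] assms \<open>k \<noteq> 0\<close> False by (simp add: Psi_def)
  qed
qed

end

lemma RP3_quot: "RP3 = quotient_topology (top_of_set (- {0})) proj_rel"
  by (simp add: RP3_def)

lemma cm_cls: "continuous_map (top_of_set (- {0})) RP3 cls"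
  using cont_quot_map[of "top_of_set (- {0})" proj_rel] unfolding RP3_quot cls_def[abs_def] .

lemma topspace_X: "topspace (subtopology (frames_top N) (generic N)) = generic N"
  by (auto simp: frames_top_def generic_def)

lemma cm_PhiT: "continuous_map (subtopology (frames_top N) (generic N)) (CL_top N) (PhiT N)"
  unfolding CL_top_def continuous_map_componentwise
proof (intro conjI ballI)
  show "PhiT N ` topspace (subtopology (frames_top N) (generic N)) \<subseteq> extensional (pairs N)"
    by (auto simp: PhiT_def)
  fix p assume p: "p \<in> pairs N"
  obtain i j where ij: "p = (i,j)" by (cases p)
  have lt: "i < N" "j < N" using p ij by (auto simp: pairs_def)
  have c1: "continuous_map (subtopology (frames_top N) (generic N)) (top_of_set (- {0})) (\<lambda>F. phi (F i) (F j))"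
  proof (rule continuous_map_into_subtopology)
    show "continuous_map (subtopology (frames_top N) (generic N)) euclidean (\<lambda>F. phi (F i) (F j))"
      by (rule continuous_map_from_subtopology[OF cm_phi[OF lt]])
    show "(\<lambda>F. phi (F i) (F j)) \<in> topspace (subtopology (frames_top N) (generic N)) \<rightarrow> - {0}"
      unfolding topspace_X using phi_nz pair_facts p ij by blast
  qed
  have "continuous_map (subtopology (frames_top N) (generic N)) RP3 (\<lambda>F. cls (phi (F i) (F j)))"
    using continuous_map_compose[OF c1 cm_cls] by (simp add: o_def)
  then show "continuous_map (subtopology (frames_top N) (generic N)) RP3 (\<lambda>x. PhiT N x p)"
    using p ij by (simp add: PhiT_def)
qed

lemma PhiT_O3: assumes "(F, F') \<in> O3_rel N" shows "PhiT N F' = PhiT N F"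
proof -
  obtain A where A: "F \<in> generic N" "F' \<in> generic N" "orthogonal_matrix A" "\<forall>i<N. F' i = act A (F i)"
    using assms unfolding O3_rel_def by blast
  have "realizes N F' (PhiT N F)" using realizes_act[OF realizes_Phi[OF A(1)]] A(4) by blast
  then show ?thesis using realizes_unique[OF A(2) PhiT_top[OF A(1)]] by simp
qed

definition fmap :: "nat \<Rightarrow> (nat \<Rightarrow> frame) set \<Rightarrow> nat \<times> nat \<Rightarrow> (plane_vec \<times> plane_vec) set" where
  "fmap N c = PhiT N (SOME F. F \<in> c)"

lemma fmap_cls: "F \<in> generic N \<Longrightarrow> fmap N (O3_rel N `` {F}) = PhiT N F"
proof -
  assume F: "F \<in> generic N"
  have "F \<in> O3_rel N `` {F}" using O3_refl[OF F] by simp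
  then have "(SOME F'. F' \<in> O3_rel N `` {F}) \<in> O3_rel N `` {F}" by (rule someI[where P = "\<lambda>F'. F' \<in> O3_rel N `` {F}"])
  then have "(F, SOME F'. F' \<in> O3_rel N `` {F}) \<in> O3_rel N" by simp
  then show ?thesis unfolding fmap_def by (rule PhiT_O3)
qed

lemma topspace_G: "topspace (G_mod_O3 N) = (\<lambda>F. O3_rel N `` {F}) ` generic N"
  unfolding G_mod_O3_def topspace_quot topspace_X ..

lemma cm_fmap: "continuous_map (G_mod_O3 N) (subtopology (CL_top N) (valid_CL N)) (fmap N)"
  unfolding G_mod_O3_def
proof (rule cont_from_quot)
  show "continuous_map (subtopology (frames_top N) (generic N)) (subtopology (CL_top N) (valid_CL N))
     (\<lambda>x. fmap N (O3_rel N `` {x}))"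
  proof (rule continuous_map_into_subtopology)
    show "continuous_map (subtopology (frames_top N) (generic N)) (CL_top N) (\<lambda>x. fmap N (O3_rel N `` {x}))"
      using cm_PhiT by (rule continuous_map_eq) (simp add: topspace_X fmap_cls)
    show "(\<lambda>x. fmap N (O3_rel N `` {x})) \<in> topspace (subtopology (frames_top N) (generic N)) \<rightarrow> valid_CL N"
      by (auto simp: topspace_X fmap_cls Phi_valid)
  qed
qed

lemma classes_nonempty: "c \<in> topspace RP3 \<Longrightarrow> (SOME y. y \<in> c) \<in> c"
  using RP3_elem cls_self by (metis someI)

lemma same_data:
  assumes F: "F \<in> generic N" and F': "F' \<in> generic N" and N: "N \<ge> 3"
    and d: "d \<in> topspace (CL_top N)" and r: "realizes N F d" and r': "realizes N F' d"
  shows "(F, F') \<in> O3_rel N"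
proof -
  define R where "R p = (SOME y. y \<in> d p)" for p
  have Rm: "R p \<in> d p" if "p \<in> pairs N" for p
    using d that classes_nonempty unfolding R_def by (auto simp: topspace_CL PiE_iff)
  have g: "good_reps N G R" if G: "realizes N G d" for G
    unfolding good_reps_def
  proof
    fix p assume p: "p \<in> pairs N"
    obtain i j where ij: "p = (i,j)" by (cases p)
    show "R p \<noteq> 0 \<and> emb (G (fst p)) (fst (R p)) = emb (G (snd p)) (snd (R p))"
      using realizes_all[OF d G p[unfolded ij] Rm[OF p, unfolded ij]] ij by simp
  qed
  obtain A where A: "orthogonal_matrix A" "\<forall>k<N. Psi R k = act A (F k)"
    using rigidity[OF F N g[OF r]] by blast
  obtain B where B: "orthogonal_matrix B" "\<forall>k<N. Psi R k = act B (F' k)"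
    using rigidity[OF F' N g[OF r']] by blast
  have "\<forall>k<N. F' k = act (transpose B ** A) (F k)"
  proof (intro allI impI)
    fix k assume "k < N"
    then have "act B (F' k) = act A (F k)" using A B by simp
    then have "act (transpose B) (act B (F' k)) = act (transpose B) (act A (F k))" by simp
    then show "F' k = act (transpose B ** A) (F k)" using act_inv[OF B(1)] act_comp by metis
  qed
  moreover have "orthogonal_matrix (transpose B ** A)"
    using A(1) B(1) by (simp add: orthogonal_matrix_mul)
  ultimately show ?thesis unfolding O3_rel_def using F F' by blast
qed

definition Vset :: "plane_vec \<times> plane_vec \<Rightarrow> (plane_vec \<times> plane_vec) set set" where
  "Vset x0 = {c \<in> topspace RP3. \<forall>y\<in>c. y \<bullet> x0 \<noteq> 0}"

definition rep :: "plane_vec \<times> plane_vec \<Rightarrow> (plane_vec \<times> plane_vec) set \<Rightarrow> plane_vec \<times> plane_vec" where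
  "rep x0 c = (1 / ((SOME y. y \<in> c) \<bullet> x0)) *\<^sub>R (SOME y. y \<in> c)"

lemma cls_top: "x \<noteq> 0 \<Longrightarrow> cls x \<in> topspace RP3"
  by (simp add: topspace_RP3)

lemma cls_in_V: "x \<noteq> 0 \<Longrightarrow> cls x \<in> Vset x0 \<longleftrightarrow> x \<bullet> x0 \<noteq> 0"
proof
  assume x: "x \<noteq> 0" and "cls x \<in> Vset x0"
  then show "x \<bullet> x0 \<noteq> 0" using cls_self[OF x] unfolding Vset_def by blast
next
  assume x: "x \<noteq> 0" and xx: "x \<bullet> x0 \<noteq> 0"
  have "\<forall>y\<in>cls x. y \<bullet> x0 \<noteq> 0"
  proof
    fix y assume "y \<in> cls x"
    then obtain c where "c \<noteq> 0" "y = c *\<^sub>R x" using cls_mem[OF x] by blast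
    then show "y \<bullet> x0 \<noteq> 0" using xx by simp
  qed
  then show "cls x \<in> Vset x0" using cls_top[OF x] unfolding Vset_def by blast
qed

lemma rep_cls:
  assumes x: "x \<noteq> 0" and xx: "x \<bullet> x0 \<noteq> 0"
  shows "rep x0 (cls x) = (1 / (x \<bullet> x0)) *\<^sub>R x"
proof -
  have "(SOME y. y \<in> cls x) \<in> cls x" using cls_self[OF x] by (rule someI)
  then obtain c where c: "c \<noteq> 0" "(SOME y. y \<in> cls x) = c *\<^sub>R x" using cls_mem[OF x] by blast
  show ?thesis unfolding rep_def c(2) using c(1) xx by simp
qed

lemma V_elem: "c \<in> Vset x0 \<Longrightarrow> \<exists>x. x \<noteq> 0 \<and> x \<bullet> x0 \<noteq> 0 \<and> c = cls x"
  using RP3_elem cls_in_V unfolding Vset_def by (metis (no_types, lifting) mem_Collect_eq)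

lemma rep_mem: "c \<in> Vset x0 \<Longrightarrow> rep x0 c \<in> c"
proof -
  assume "c \<in> Vset x0"
  then obtain x where x: "x \<noteq> 0" "x \<bullet> x0 \<noteq> 0" "c = cls x" using V_elem by blast
  show ?thesis unfolding x(3) rep_cls[OF x(1,2)] cls_mem[OF x(1)] using x(2)
    by (intro exI[of _ "1 / (x \<bullet> x0)"]) simp
qed

lemma preimage_V: "{x \<in> topspace (top_of_set (- {0})). proj_rel `` {x} \<in> Vset x0} = (- {0}) \<inter> {x. x \<bullet> x0 \<noteq> 0}"
proof (rule set_eqI)
  fix x :: "plane_vec \<times> plane_vec"
  show "x \<in> {x \<in> topspace (top_of_set (- {0})). proj_rel `` {x} \<in> Vset x0} \<longleftrightarrow> x \<in> (- {0}) \<inter> {x. x \<bullet> x0 \<noteq> 0}"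
    using cls_in_V[of x x0] unfolding cls_def by auto
qed

lemma open_V: "openin RP3 (Vset x0)"
  unfolding RP3_quot openin_quot
proof
  show "Vset x0 \<subseteq> (\<lambda>x. proj_rel `` {x}) ` topspace (top_of_set (- {0}))"
    using topspace_RP3 unfolding Vset_def cls_def[abs_def] by auto
  have "open {x::plane_vec \<times> plane_vec. x \<bullet> x0 \<noteq> 0}"
    by (rule open_Collect_neq) (intro continuous_intros)+
  then show "openin (top_of_set (- {0})) {x \<in> topspace (top_of_set (- {0})). proj_rel `` {x} \<in> Vset x0}"
    unfolding preimage_V by (rule openin_open_Int)
qed

lemma cm_rep: "continuous_map (subtopology RP3 (Vset x0)) euclidean (rep x0)"
  unfolding RP3_quot
proof (rule cont_from_quot_open)
  show "openin (quotient_topology (top_of_set (- {0})) proj_rel) (Vset x0)"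
    using open_V unfolding RP3_quot .
  have "continuous_on ((- {0}) \<inter> {x. x \<bullet> x0 \<noteq> 0}) (\<lambda>x. (1 / (x \<bullet> x0)) *\<^sub>R x)"
    by (intro continuous_intros) auto
  then have "continuous_on ((- {0}) \<inter> {x. x \<bullet> x0 \<noteq> 0}) (\<lambda>x. rep x0 (proj_rel `` {x}))"
    by (rule continuous_on_eq) (simp add: rep_cls[unfolded cls_def])
  then show "continuous_map (subtopology (top_of_set (- {0})) {x \<in> topspace (top_of_set (- {0})). proj_rel `` {x} \<in> Vset x0})
     euclidean (\<lambda>x. rep x0 (proj_rel `` {x}))"
    unfolding preimage_V subtopology_subtopology by (simp add: Int_absorb1)
qed

definition gmap :: "nat \<Rightarrow> (nat \<times> nat \<Rightarrow> (plane_vec \<times> plane_vec) set) \<Rightarrow> (nat \<Rightarrow> frame) set" where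
  "gmap N d = O3_rel N `` {SOME F. F \<in> generic N \<and> realizes N F d}"

definition PsiT :: "nat \<Rightarrow> reps \<Rightarrow> nat \<Rightarrow> frame" where
  "PsiT N R = restrict (Psi R) {..<N}"

lemma valid_some:
  assumes "d \<in> valid_CL N"
  shows "(SOME F. F \<in> generic N \<and> realizes N F d) \<in> generic N \<and> realizes N (SOME F. F \<in> generic N \<and> realizes N F d) d"
proof -
  have "\<exists>F. F \<in> generic N \<and> realizes N F d" using assms unfolding valid_CL_def by blast
  then show ?thesis by (rule someI_ex)
qed

lemma valid_top: "d \<in> valid_CL N \<Longrightarrow> d \<in> topspace (CL_top N)"
  unfolding valid_CL_def by blast

lemma finite_pairs: "finite (pairs N)"
proof -
  have "pairs N \<subseteq> {..<N} \<times> {..<N}" by (auto simp: pairs_def)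
  then show ?thesis by (rule finite_subset) simp
qed

lemma gmap_local:
  assumes N: "N \<ge> 3" and d0: "d0 \<in> valid_CL N"
  shows "\<exists>U. openin (subtopology (CL_top N) (valid_CL N)) U \<and> d0 \<in> U \<and>
             continuous_map (subtopology (subtopology (CL_top N) (valid_CL N)) U) (G_mod_O3 N) (gmap N)"
proof -
  define x0 where "x0 p = (SOME y. y \<in> d0 p)" for p
  define U where "U = valid_CL N \<inter> PiE (pairs N) (\<lambda>p. Vset (x0 p))"
  define Rf where "Rf d p = (if p \<in> pairs N then rep (x0 p) (d p) else 0)" for d p
  define Fd where "Fd d = (SOME F. F \<in> generic N \<and> realizes N F d)" for d
  have d0top: "d0 \<in> topspace (CL_top N)" using d0 by (rule valid_top)
  have PiEo: "openin (CL_top N) (PiE (pairs N) (\<lambda>p. Vset (x0 p)))"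
    unfolding CL_top_def openin_PiE_gen
    by (intro disjI2 conjI ballI open_V) (rule finite_subset[OF _ finite_pairs], blast)
  then have Uo: "openin (subtopology (CL_top N) (valid_CL N)) U"
    unfolding U_def using openin_subtopology_Int[OF PiEo, of "valid_CL N"] by (simp add: Int_commute)
  have "d0 p \<in> Vset (x0 p)" if p: "p \<in> pairs N" for p
  proof -
    have "d0 p \<in> topspace RP3" using d0top p by (auto simp: topspace_CL PiE_iff)
    then obtain x where x: "x \<noteq> 0" "d0 p = cls x" using RP3_elem by blast
    have "x0 p \<in> cls x" unfolding x0_def x(2)[symmetric] using classes_nonempty \<open>d0 p \<in> topspace RP3\<close> by blast
    then obtain c where c: "c \<noteq> 0" "x0 p = c *\<^sub>R x" using cls_mem[OF x(1)] by blast
    have "x \<bullet> x0 p \<noteq> 0" using c x(1) by simp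
    then show ?thesis using cls_in_V[OF x(1)] x(2) by simp
  qed
  moreover have "d0 \<in> extensional (pairs N)" using d0top by (simp add: topspace_CL PiE_iff)
  ultimately have "d0 \<in> PiE (pairs N) (\<lambda>p. Vset (x0 p))" by (simp add: PiE_iff)
  then have d0U: "d0 \<in> U" unfolding U_def using d0 by blast
  have Uvalid: "U \<subseteq> valid_CL N" unfolding U_def by blast
  have Fd: "Fd d \<in> generic N" "realizes N (Fd d) d" if "d \<in> U" for d
  proof -
    have "d \<in> valid_CL N" using Uvalid that by blast
    note v = valid_some[OF this]
    show "Fd d \<in> generic N" unfolding Fd_def using v by (rule conjunct1)
    show "realizes N (Fd d) d" unfolding Fd_def using v by (rule conjunct2)
  qed
  have good: "good_reps N (Fd d) (Rf d)" if dU: "d \<in> U" for d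
    unfolding good_reps_def
  proof
    fix p assume p: "p \<in> pairs N"
    obtain i j where ij: "p = (i,j)" by (cases p)
    have "d \<in> PiE (pairs N) (\<lambda>p. Vset (x0 p))" using dU unfolding U_def by blast
    then have "d p \<in> Vset (x0 p)" using p by (rule PiE_mem)
    then have "Rf d p \<in> d p" using p rep_mem by (simp add: Rf_def)
    then show "Rf d p \<noteq> 0 \<and> emb (Fd d (fst p)) (fst (Rf d p)) = emb (Fd d (snd p)) (snd (Rf d p))"
      using realizes_all[OF valid_top[OF subsetD[OF Uvalid dU]] Fd(2)[OF dU] p[unfolded ij]] ij by simp
  qed
  have rig: "\<exists>A. orthogonal_matrix A \<and> (\<forall>k<N. Psi (Rf d) k = act A (Fd d k))" if "d \<in> U" for d
    using rigidity[OF Fd(1)[OF that] N good[OF that]] .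
  have PsiT_rel: "(Fd d, PsiT N (Rf d)) \<in> O3_rel N" "PsiT N (Rf d) \<in> generic N" if dU: "d \<in> U" for d
  proof -
    obtain A where A: "orthogonal_matrix A" "\<forall>k<N. Psi (Rf d) k = act A (Fd d k)" using rig[OF dU] by blast
    have eq: "PsiT N (Rf d) = restrict (\<lambda>i. act A (Fd d i)) {..<N}"
      unfolding PsiT_def using A(2) by (auto simp: restrict_def)
    show g: "PsiT N (Rf d) \<in> generic N" unfolding eq using generic_act[OF Fd(1)[OF dU] A(1)] .
    have "\<forall>i<N. PsiT N (Rf d) i = act A (Fd d i)" using A(2) by (simp add: PsiT_def)
    then show "(Fd d, PsiT N (Rf d)) \<in> O3_rel N"
      unfolding O3_rel_def using Fd(1)[OF dU] g A(1) by blast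
  qed
  have gmap_eq: "gmap N d = O3_rel N `` {PsiT N (Rf d)}" if "d \<in> U" for d
    unfolding gmap_def Fd_def[symmetric] using O3_cls_eq[OF PsiT_rel(1)[OF that]] .
  define Y where "Y = subtopology (CL_top N) U"
  have topY: "topspace Y = U" unfolding Y_def topspace_subtopology using Uvalid valid_top by blast
  have cR: "continuous_map Y euclidean (\<lambda>d. Rf d p)" for p
  proof (cases "p \<in> pairs N")
    case False then show ?thesis by (simp add: Rf_def)
  next
    case True
    have "continuous_map Y (subtopology RP3 (Vset (x0 p))) (\<lambda>d. d p)"
    proof (rule continuous_map_into_subtopology)
      show "continuous_map Y RP3 (\<lambda>d. d p)"
        unfolding Y_def CL_top_def by (rule continuous_map_from_subtopology) (rule continuous_map_product_projection[OF True])
      show "(\<lambda>d. d p) \<in> topspace Y \<rightarrow> Vset (x0 p)" unfolding topY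
      proof
        fix d assume "d \<in> U"
        then have "d \<in> PiE (pairs N) (\<lambda>p. Vset (x0 p))" unfolding U_def by blast
        then show "d p \<in> Vset (x0 p)" using True by (rule PiE_mem)
      qed
    qed
    from continuous_map_compose[OF this cm_rep] show ?thesis using True by (simp add: Rf_def o_def)
  qed
  interpret cmR Y Rf by unfold_locales (rule cR)
  have cPsi: "continuous_map Y euclidean (\<lambda>d. Psi (Rf d) k)" if kN: "k < N" for k
  proof (rule cm_Psi)
    fix x assume "x \<in> topspace Y"
    then have xU: "x \<in> U" by (simp add: topY)
    note D = dets_nz[OF Fd(1)[OF xU] N good[OF xU]]
    show "det2 (fst (Rf x (0, 1))) (fst (Rf x (0, 2))) \<noteq> 0" using D(1) .
    show "det2 (snd (Rf x (0, 1))) (fst (Rf x (1, 2))) \<noteq> 0" using D(2) .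
  next
    fix x assume "2 \<le> k" "x \<in> topspace Y"
    then have xU: "x \<in> U" by (simp add: topY)
    note D = dets_nz[OF Fd(1)[OF xU] N good[OF xU]]
    show "det2 (snd (Rf x (0, k))) (snd (Rf x (1, k))) \<noteq> 0" using D(3) \<open>2 \<le> k\<close> kN by blast
  qed
  have cPsiT: "continuous_map Y (subtopology (frames_top N) (generic N)) (\<lambda>d. PsiT N (Rf d))"
  proof (rule continuous_map_into_subtopology)
    show "continuous_map Y (frames_top N) (\<lambda>d. PsiT N (Rf d))"
      unfolding frames_top_def continuous_map_componentwise
    proof (intro conjI ballI)
      show "(\<lambda>d. PsiT N (Rf d)) ` topspace Y \<subseteq> extensional {..<N}" by (auto simp: PsiT_def)
      fix k assume "k \<in> {..<N}"
      then show "continuous_map Y euclidean (\<lambda>x. PsiT N (Rf x) k)" using cPsi by (simp add: PsiT_def)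
    qed
    show "(\<lambda>d. PsiT N (Rf d)) \<in> topspace Y \<rightarrow> generic N" using PsiT_rel(2) by (simp add: topY)
  qed
  have "continuous_map Y (G_mod_O3 N) (\<lambda>d. O3_rel N `` {PsiT N (Rf d)})"
    using continuous_map_compose[OF cPsiT cont_quot_map] unfolding G_mod_O3_def by (simp add: o_def)
  then have "continuous_map Y (G_mod_O3 N) (gmap N)"
    by (rule continuous_map_eq) (simp add: topY gmap_eq)
  moreover have "subtopology (subtopology (CL_top N) (valid_CL N)) U = Y"
    unfolding Y_def subtopology_subtopology using Uvalid by (simp add: Int_absorb1)
  ultimately have C: "continuous_map (subtopology (subtopology (CL_top N) (valid_CL N)) U) (G_mod_O3 N) (gmap N)"
    by simp
  show ?thesis by (intro exI[of _ U] conjI Uo d0U C)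
qed

lemma cm_gmap:
  assumes N: "N \<ge> 3"
  shows "continuous_map (subtopology (CL_top N) (valid_CL N)) (G_mod_O3 N) (gmap N)"
proof (rule cont_local)
  fix x assume "x \<in> topspace (subtopology (CL_top N) (valid_CL N))"
  then have "x \<in> valid_CL N" by simp
  then show "\<exists>U. openin (subtopology (CL_top N) (valid_CL N)) U \<and> x \<in> U \<and>
             continuous_map (subtopology (subtopology (CL_top N) (valid_CL N)) U) (G_mod_O3 N) (gmap N)"
    using gmap_local[OF N] by blast
qed

theorem corollary1:
  fixes N :: nat
  assumes "N \<ge> 3"
  shows "subtopology (CL_top N) (valid_CL N) homeomorphic_space G_mod_O3 N"
proof -
  have tv: "topspace (subtopology (CL_top N) (valid_CL N)) = valid_CL N"
    using valid_top by auto
  have "homeomorphic_maps (subtopology (CL_top N) (valid_CL N)) (G_mod_O3 N) (gmap N) (fmap N)"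
    unfolding homeomorphic_maps_def
  proof (intro conjI ballI)
    show "continuous_map (subtopology (CL_top N) (valid_CL N)) (G_mod_O3 N) (gmap N)"
      using cm_gmap[OF assms] .
    show "continuous_map (G_mod_O3 N) (subtopology (CL_top N) (valid_CL N)) (fmap N)"
      using cm_fmap .
  next
    fix d assume "d \<in> topspace (subtopology (CL_top N) (valid_CL N))"
    then have d: "d \<in> valid_CL N" by (simp add: tv)
    note F = valid_some[OF d]
    show "fmap N (gmap N d) = d"
      unfolding gmap_def fmap_cls[OF conjunct1[OF F]]
      using realizes_unique[OF conjunct1[OF F] valid_top[OF d] conjunct2[OF F]] by simp
  next
    fix c assume "c \<in> topspace (G_mod_O3 N)"
    then obtain F where F: "F \<in> generic N" "c = O3_rel N `` {F}" unfolding topspace_G by blast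
    have fc: "fmap N c = PhiT N F" using F fmap_cls by simp
    note F' = valid_some[OF Phi_valid[OF F(1)]]
    have rel: "(F, SOME F'. F' \<in> generic N \<and> realizes N F' (PhiT N F)) \<in> O3_rel N"
      using same_data[OF F(1) conjunct1[OF F'] assms PhiT_top[OF F(1)] realizes_Phi[OF F(1)] conjunct2[OF F']] .
    have "gmap N (fmap N c) = O3_rel N `` {SOME F'. F' \<in> generic N \<and> realizes N F' (PhiT N F)}"
      unfolding fc gmap_def ..
    also have "\<dots> = O3_rel N `` {F}" using O3_cls_eq[OF rel] by simp
    finally show "gmap N (fmap N c) = c" using F(2) by simp
  qed
  then show ?thesis by (rule homeomorphic_maps_imp_homeomorphic_space)
qed

end
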